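(* Let $\mathbb X$ be a basic space and $\mathcal D=(D,<,\rho)$ a computable partially ordered set. Every partial function in $\mathrm{Max}_{\mathrm{PR}}[\mathbb X\to\mathcal D]$ or in $\mathrm{Min}_{\mathrm{PR}}[\mathbb X\to\mathcal D]$ has a $\Sigma^0_1\wedge\Pi^0_1$ graph and a $\Sigma^0_2$ domain.
   Context: A basic space is a finite non-empty product of sets each of which is $\mathbb N$, $\mathbb Z$, or $A^*$ for some finite alphabet $A$. A computable partially ordered set is a triple $\mathcal D=(D,<,\rho)$ where $\rho:\mathbb N\to D$ is a bijection and $<$ is a strict partial order on $D$ with $\{(m,n):\rho(m)<\rho(n)\}$ computable; a partial function into $D$ is partial computable if its composition with $\rho^{-1}$ is. For a partial $f:\mathbb X\times\mathbb N\to D$ monotone increasing (resp. decreasing) in its second argument on its domain, $\max^{\mathcal D}f$ (resp. $\min^{\mathcal D}f$) is the partial function defined exactly at those $x$ for which $\{f(x,t):t,\ f(x,t)\text{ defined}\}$ is finite and non-empty, with value its maximum (resp. minimum). $\mathrm{Max}_{\mathrm{PR}}[\mathbb X\to\mathcal D]$ (resp. $\mathrm{Min}_{\mathrm{PR}}[\mathbb X\to\mathcal D]$) is the class of all $\max^{\mathcal D}f$ (resp. $\min^{\mathcal D}f$) with $f$ partial computable and monotone increasing (resp. decreasing) in its second argument. A relation $R\subseteq\mathbb X\times D$ is $\Sigma^0_n$, $\Pi^0_n$, or $\Sigma^0_1\wedge\Pi^0_1$ (conjunction of a $\Sigma^0_1$ and a $\Pi^0_1$ relation) if so is $\{(x,n):(x,\rho(n))\in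 R\}\subseteq\mathbb X\times\mathbb N$ in the arithmetical hierarchy. *)

theory Defs
  imports Main "HOL-Library.Nat_Bijection"
begin

datatype recf = Zero | Succ | Proj nat | Comp recf "recf list" | Prim recf recf | Mn recf

inductive eval :: "recf \<Rightarrow> nat list \<Rightarrow> nat \<Rightarrow> bool" where
  eval_Zero: "eval Zero xs 0"
| eval_Succ: "eval Succ (x # xs) (Suc x)"
| eval_Proj: "i < length xs \<Longrightarrow> eval (Proj i) xs (xs ! i)"
| eval_Comp: "length ys = length gs \<Longrightarrow> (\<forall>i < length gs. eval (gs ! i) xs (ys ! i))
      \<Longrightarrow> eval f ys z \<Longrightarrow> eval (Comp f gs) xs z"
| eval_Prim0: "eval f xs y \<Longrightarrow> eval (Prim f g) (0 # xs) y"
| eval_PrimS: "eval (Prim f g) (n # xs) y \<Longrightarrow> eval g (y # n # xs) z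
      \<Longrightarrow> eval (Prim f g) (Suc n # xs) z"
| eval_Mn: "eval f (n # xs) 0 \<Longrightarrow> (\<forall>m < n. \<exists>k. k \<noteq> 0 \<and> eval f (m # xs) k)
      \<Longrightarrow> eval (Mn f) xs n"

definition partrec :: "(nat \<Rightarrow> nat option) \<Rightarrow> bool" where
  "partrec \<phi> \<longleftrightarrow> (\<exists>r. \<forall>x y. eval r [x] y \<longleftrightarrow> \<phi> x = Some y)"

definition computable_set :: "nat set \<Rightarrow> bool" where
  "computable_set A \<longleftrightarrow> partrec (\<lambda>x. Some (if x \<in> A then 1 else 0))"

fun Sigma :: "nat \<Rightarrow> nat set \<Rightarrow> bool" where
  "Sigma 0 A = computable_set A"
| "Sigma (Suc n) A = (\<exists>P. Sigma n (- P) \<and> A = {c. \<exists>m. prod_encode (c, m) \<in> P})"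

definition Pi :: "nat \<Rightarrow> nat set \<Rightarrow> bool" where
  "Pi n A \<longleftrightarrow> Sigma n (- A)"

text \<open>Component kinds: N, Z, or A* for a finite alphabet A, identified with {0..<k}, k = |A|.\<close>
datatype bkind = KN | KZ | KW nat
datatype bval = VN nat | VZ int | VW "nat list"

fun in_kind :: "bkind \<Rightarrow> bval \<Rightarrow> bool" where
  "in_kind KN (VN _) = True"
| "in_kind KZ (VZ _) = True"
| "in_kind (KW k) (VW w) = (\<forall>a \<in> set w. a < k)"
| "in_kind _ _ = False"

text \<open>The basic space with component list ks (a basic space requires ks nonempty).\<close>
definition bspace :: "bkind list \<Rightarrow> bval list set" where
  "bspace ks = {xs. list_all2 in_kind ks xs}"

fun code_val :: "bval \<Rightarrow> nat" where
  "code_val (VN n) = n"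
| "code_val (VZ i) = int_encode i"
| "code_val (VW w) = list_encode w"

text \<open>Standard (computable, injective on each basic space) coding of points by naturals.\<close>
definition code :: "bval list \<Rightarrow> nat" where
  "code xs = list_encode (map code_val xs)"

definition comp_poset :: "('d \<Rightarrow> 'd \<Rightarrow> bool) \<Rightarrow> (nat \<Rightarrow> 'd) \<Rightarrow> bool" where
  "comp_poset lt \<rho> \<longleftrightarrow> bij \<rho> \<and> (\<forall>x. \<not> lt x x) \<and>
     (\<forall>x y z. lt x y \<longrightarrow> lt y z \<longrightarrow> lt x z) \<and>
     computable_set {c. lt (\<rho> (fst (prod_decode c))) (\<rho> (snd (prod_decode c)))}"

definition pcomp2 :: "bkind list \<Rightarrow> (nat \<Rightarrow> 'd) \<Rightarrow> (bval list \<Rightarrow> nat \<Rightarrow> 'd option) \<Rightarrow> bool" where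
  "pcomp2 ks \<rho> f \<longleftrightarrow> (\<exists>\<phi>. partrec \<phi> \<and>
     (\<forall>x \<in> bspace ks. \<forall>t. \<phi> (prod_encode (code x, t)) = map_option (inv \<rho>) (f x t)))"

definition mono_incr :: "bkind list \<Rightarrow> ('d \<Rightarrow> 'd \<Rightarrow> bool) \<Rightarrow> (bval list \<Rightarrow> nat \<Rightarrow> 'd option) \<Rightarrow> bool" where
  "mono_incr ks lt f \<longleftrightarrow> (\<forall>x \<in> bspace ks. \<forall>t t' a b. t \<le> t' \<longrightarrow> f x t = Some a \<longrightarrow>
      f x t' = Some b \<longrightarrow> (a = b \<or> lt a b))"

definition mono_decr :: "bkind list \<Rightarrow> ('d \<Rightarrow> 'd \<Rightarrow> bool) \<Rightarrow> (bval list \<Rightarrow> nat \<Rightarrow> 'd option) \<Rightarrow> bool" where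
  "mono_decr ks lt f \<longleftrightarrow> (\<forall>x \<in> bspace ks. \<forall>t t' a b. t \<le> t' \<longrightarrow> f x t = Some a \<longrightarrow>
      f x t' = Some b \<longrightarrow> (a = b \<or> lt b a))"

definition values_at :: "(bval list \<Rightarrow> nat \<Rightarrow> 'd option) \<Rightarrow> bval list \<Rightarrow> 'd set" where
  "values_at f x = {v. \<exists>t. f x t = Some v}"

definition maxD :: "('d \<Rightarrow> 'd \<Rightarrow> bool) \<Rightarrow> (bval list \<Rightarrow> nat \<Rightarrow> 'd option) \<Rightarrow> bval list \<Rightarrow> 'd option" where
  "maxD lt f x = (if finite (values_at f x) \<and> values_at f x \<noteq> {}
     then Some (THE v. v \<in> values_at f x \<and> (\<forall>w \<in> values_at f x. w = v \<or> lt w v)) else None)"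

definition minD :: "('d \<Rightarrow> 'd \<Rightarrow> bool) \<Rightarrow> (bval list \<Rightarrow> nat \<Rightarrow> 'd option) \<Rightarrow> bval list \<Rightarrow> 'd option" where
  "minD lt f x = (if finite (values_at f x) \<and> values_at f x \<noteq> {}
     then Some (THE v. v \<in> values_at f x \<and> (\<forall>w \<in> values_at f x. w = v \<or> lt v w)) else None)"

text \<open>Partial functions X -> D are compared only on X.\<close>
definition MaxPR :: "bkind list \<Rightarrow> ('d \<Rightarrow> 'd \<Rightarrow> bool) \<Rightarrow> (nat \<Rightarrow> 'd) \<Rightarrow> (bval list \<Rightarrow> 'd option) set" where
  "MaxPR ks lt \<rho> = {g. \<exists>f. pcomp2 ks \<rho> f \<and> mono_incr ks lt f \<and>
      (\<forall>x \<in> bspace ks. g x = maxD lt f x)}"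

definition MinPR :: "bkind list \<Rightarrow> ('d \<Rightarrow> 'd \<Rightarrow> bool) \<Rightarrow> (nat \<Rightarrow> 'd) \<Rightarrow> (bval list \<Rightarrow> 'd option) set" where
  "MinPR ks lt \<rho> = {g. \<exists>f. pcomp2 ks \<rho> f \<and> mono_decr ks lt f \<and>
      (\<forall>x \<in> bspace ks. g x = minD lt f x)}"

definition rel_Sigma :: "nat \<Rightarrow> bkind list \<Rightarrow> (nat \<Rightarrow> 'd) \<Rightarrow> (bval list \<times> 'd) set \<Rightarrow> bool" where
  "rel_Sigma n ks \<rho> R \<longleftrightarrow> (\<exists>A. Sigma n A \<and>
     (\<forall>x \<in> bspace ks. \<forall>m. (x, \<rho> m) \<in> R \<longleftrightarrow> prod_encode (code x, m) \<in> A))"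

definition rel_Pi :: "nat \<Rightarrow> bkind list \<Rightarrow> (nat \<Rightarrow> 'd) \<Rightarrow> (bval list \<times> 'd) set \<Rightarrow> bool" where
  "rel_Pi n ks \<rho> R \<longleftrightarrow> (\<exists>A. Pi n A \<and>
     (\<forall>x \<in> bspace ks. \<forall>m. (x, \<rho> m) \<in> R \<longleftrightarrow> prod_encode (code x, m) \<in> A))"

definition rel_Sigma1_and_Pi1 :: "bkind list \<Rightarrow> (nat \<Rightarrow> 'd) \<Rightarrow> (bval list \<times> 'd) set \<Rightarrow> bool" where
  "rel_Sigma1_and_Pi1 ks \<rho> R \<longleftrightarrow> (\<exists>S P. rel_Sigma 1 ks \<rho> S \<and> rel_Pi 1 ks \<rho> P \<and>
     (\<forall>x \<in> bspace ks. \<forall>d. (x, d) \<in> R \<longleftrightarrow> (x, d) \<in> S \<and> (x, d) \<in> P))"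

definition set_Sigma :: "nat \<Rightarrow> bkind list \<Rightarrow> bval list set \<Rightarrow> bool" where
  "set_Sigma n ks S \<longleftrightarrow> (\<exists>A. Sigma n A \<and> (\<forall>x \<in> bspace ks. x \<in> S \<longleftrightarrow> code x \<in> A))"

definition graph_on :: "bkind list \<Rightarrow> (bval list \<Rightarrow> 'd option) \<Rightarrow> (bval list \<times> 'd) set" where
  "graph_on ks g = {(x, d). x \<in> bspace ks \<and> g x = Some d}"

definition dom_on :: "bkind list \<Rightarrow> (bval list \<Rightarrow> 'd option) \<Rightarrow> bval list set" where
  "dom_on ks g = {x. x \<in> bspace ks \<and> g x \<noteq> None}"

end

theory Submission
  imports Defs
begin

inductive_cases evalZeroE: "eval Zero xs y"
inductive_cases evalSuccE: "eval Succ xs y"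
inductive_cases evalProjE: "eval (Proj i) xs y"
inductive_cases evalCompE: "eval (Comp f gs) xs y"
inductive_cases evalPrimE: "eval (Prim f g) xs y"
inductive_cases evalMnE: "eval (Mn f) xs y"
inductive_cases evalPrim0E: "eval (Prim f g) (0 # xs) y"
inductive_cases evalPrimSE: "eval (Prim f g) (Suc n # xs) y"
inductive_cases evalPrimNilE: "eval (Prim f g) [] y"

lemma eval_det: "eval r xs y \<Longrightarrow> eval r xs y' \<Longrightarrow> y = y'"
proof (induction arbitrary: y' rule: eval.induct)
  case (eval_Zero xs)
  then show ?case by (auto elim: evalZeroE)
next
  case (eval_Succ x xs)
  then show ?case by (auto elim: evalSuccE)
next
  case (eval_Proj i xs)
  then show ?case by (auto elim: evalProjE)
next
  case (eval_Comp ys gs xs f z)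
  from eval_Comp.prems obtain ys' where l: "length ys' = length gs"
    and a: "\<forall>i<length gs. eval (gs ! i) xs (ys' ! i)" and b: "eval f ys' y'"
    by (auto elim: evalCompE)
  have "ys = ys'"
  proof (rule nth_equalityI)
    show "length ys = length ys'" using eval_Comp.hyps(1) l by simp
    fix i assume "i < length ys"
    then have i: "i < length gs" using eval_Comp.hyps(1) by simp
    then show "ys ! i = ys' ! i" using eval_Comp.IH(1) a by blast
  qed
  then have "eval f ys y'" using b by simp
  then show ?case by (rule eval_Comp.IH(2))
next
  case (eval_Prim0 f xs y g)
  from eval_Prim0.prems have "eval f xs y'" by (rule evalPrim0E)
  then show ?case by (rule eval_Prim0.IH)
next
  case (eval_PrimS f g n xs y z)
  from eval_PrimS.prems obtain y2 where "eval (Prim f g) (n # xs) y2" "eval g (y2 # n # xs) y'"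
    by (rule evalPrimSE)
  then show ?case using eval_PrimS.IH by metis
next
  case (eval_Mn f n xs)
  from eval_Mn.prems obtain n' where e: "eval f (n' # xs) 0"
    and ne: "\<forall>m<n'. \<exists>k. k \<noteq> 0 \<and> eval f (m # xs) k" and yy: "y' = n'"
    by (rule evalMnE) blast
  show ?case
  proof (cases n n' rule: linorder_cases)
    case less
    then obtain k where "k \<noteq> 0" "eval f (n # xs) k" using ne by blast
    then show ?thesis using eval_Mn.IH(1) by metis
  next
    case greater
    then show ?thesis using eval_Mn.IH(2) e by metis
  qed (simp add: yy)
qed

definition tot :: "nat \<Rightarrow> (nat list \<Rightarrow> nat) \<Rightarrow> bool" where
  "tot k h \<longleftrightarrow> (\<exists>r. \<forall>xs. length xs = k \<longrightarrow> eval r xs (h xs))"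

definition totL :: "nat \<Rightarrow> nat \<Rightarrow> (nat list \<Rightarrow> nat list) \<Rightarrow> bool" where
  "totL k m G \<longleftrightarrow> (\<forall>xs. length xs = k \<longrightarrow> length (G xs) = m) \<and> (\<forall>i<m. tot k (\<lambda>xs. G xs ! i))"

lemma tot_cong: "tot k h \<Longrightarrow> (\<And>xs. length xs = k \<Longrightarrow> h xs = h' xs) \<Longrightarrow> tot k h'"
  unfolding tot_def by metis

fun rconst :: "nat \<Rightarrow> recf" where
  "rconst 0 = Zero" | "rconst (Suc c) = Comp Succ [rconst c]"

lemma eval_rconst: "eval (rconst c) xs c"
proof (induction c)
  case 0 then show ?case by (simp add: eval_Zero)
next
  case (Suc c)
  have "eval (Comp Succ [rconst c]) xs (Suc c)"
    by (rule eval_Comp[where ys="[c]"]) (use Suc in \<open>auto intro: eval_Succ\<close>)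
  then show ?case by simp
qed

lemma tot_const: "tot k (\<lambda>_. c)"
  unfolding tot_def using eval_rconst by blast

lemma tot_proj: "i < k \<Longrightarrow> tot k (\<lambda>xs. xs ! i)"
  unfolding tot_def using eval_Proj by auto

lemma tot_compL: fixes G :: "nat list \<Rightarrow> nat list" assumes "tot m f" "totL k m G" shows "tot k (\<lambda>xs. f (G xs))"
proof -
  obtain rf where rf: "\<forall>xs. length xs = m \<longrightarrow> eval rf xs (f xs)" using assms(1) tot_def by blast
  have ex: "\<forall>i<m. \<exists>r. \<forall>xs. length xs = k \<longrightarrow> eval r xs (G xs ! i)"
    using assms(2) unfolding totL_def tot_def by blast
  define rs where "rs = map (\<lambda>i. SOME r. \<forall>xs. length xs = k \<longrightarrow> eval r xs (G xs ! i)) [0..<m]"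
  have rs: "\<forall>i<m. \<forall>xs. length xs = k \<longrightarrow> eval (rs ! i) xs (G xs ! i)"
  proof (intro allI impI)
    fix i and xs :: "nat list" assume i: "i < m" and "length xs = k"
    have "\<forall>xs. length xs = k \<longrightarrow> eval (rs ! i) xs (G xs ! i)"
      unfolding rs_def using i ex someI_ex[of "\<lambda>r. \<forall>xs. length xs = k \<longrightarrow> eval r xs (G xs ! i)"] by auto
    then show "eval (rs ! i) xs (G xs ! i)" using \<open>length xs = k\<close> by blast
  qed
  have "\<forall>xs. length xs = k \<longrightarrow> eval (Comp rf rs) xs (f (G xs))"
  proof (intro allI impI)
    fix xs :: "nat list" assume l: "length xs = k"
    have lg: "length (G xs) = m" using assms(2) l unfolding totL_def by blast
    show "eval (Comp rf rs) xs (f (G xs))"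
      by (rule eval_Comp[where ys="G xs"]) (use lg rs l rf in \<open>auto simp: rs_def\<close>)
  qed
  then show ?thesis unfolding tot_def by blast
qed

lemma totL_Nil: "totL k 0 (\<lambda>_. [])"
  unfolding totL_def by simp

lemma totL_Cons: assumes "tot k g" "totL k m G" shows "totL k (Suc m) (\<lambda>xs. g xs # G xs)"
  unfolding totL_def
proof (intro conjI allI impI)
  fix xs :: "nat list" assume "length xs = k" then show "length (g xs # G xs) = Suc m"
    using assms(2) totL_def by auto
next
  fix i assume "i < Suc m"
  then show "tot k (\<lambda>xs. (g xs # G xs) ! i)"
  proof (cases i)
    case 0 then show ?thesis using assms(1) by simp
  next
    case (Suc j) then show ?thesis using assms(2) \<open>i < Suc m\<close> unfolding totL_def by simp
  qed
qed

lemma totL_drop: "totL (n + m) m (\<lambda>xs. drop n xs)"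
  unfolding totL_def
proof (intro conjI allI impI)
  fix i assume "i < m"
  then show "tot (n + m) (\<lambda>xs. drop n xs ! i)" by (intro tot_cong[OF tot_proj[of "n + i" "n + m"]]) auto
qed auto

lemma totL_take: "n \<le> k \<Longrightarrow> totL k n (\<lambda>xs. take n xs)"
  unfolding totL_def
proof (intro conjI allI impI)
  fix i assume "n \<le> k" "i < n"
  then show "tot k (\<lambda>xs. take n xs ! i)" by (intro tot_cong[OF tot_proj[of i k]]) auto
qed auto

lemma totL_id: "totL k k (\<lambda>xs. xs)"
  unfolding totL_def by (auto intro: tot_proj)

lemma totL_comp: assumes "totL m n G" "totL k m H" shows "totL k n (\<lambda>xs. G (H xs))"
  unfolding totL_def
proof (intro conjI allI impI)
  fix xs :: "nat list" assume "length xs = k" then show "length (G (H xs)) = n"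
    using assms unfolding totL_def by auto
next
  fix i assume "i < n"
  then have "tot m (\<lambda>xs. G xs ! i)" using assms(1) unfolding totL_def by auto
  then show "tot k (\<lambda>xs. G (H xs) ! i)" using tot_compL assms(2) by blast
qed

definition prec :: "(nat list \<Rightarrow> nat) \<Rightarrow> (nat list \<Rightarrow> nat) \<Rightarrow> nat list \<Rightarrow> nat" where
  "prec f g xs = rec_nat (f (tl xs)) (\<lambda>n y. g (y # n # tl xs)) (hd xs)"

lemma tot_prim: assumes "tot k f" "tot (Suc (Suc k)) g" shows "tot (Suc k) (prec f g)"
proof -
  obtain rf where rf: "\<forall>xs. length xs = k \<longrightarrow> eval rf xs (f xs)" using assms(1) tot_def by blast
  obtain rg where rg: "\<forall>xs. length xs = Suc (Suc k) \<longrightarrow> eval rg xs (g xs)" using assms(2) tot_def by blast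
  have "eval (Prim rf rg) (n # xs) (prec f g (n # xs))" if "length xs = k" for n xs
  proof (induction n)
    case 0 then show ?case using rf that by (simp add: prec_def eval_Prim0)
  next
    case (Suc n)
    then show ?case using rg that by (auto simp: prec_def intro: eval_PrimS)
  qed
  then show ?thesis unfolding tot_def
    by (metis length_Suc_conv)
qed

lemma tot_Suc: assumes "tot k f" shows "tot k (\<lambda>xs. Suc (f xs))"
proof -
  have "tot 1 (\<lambda>xs. Suc (hd xs))" unfolding tot_def
    by (rule exI[of _ Succ]) (auto simp: length_Suc_conv intro: eval_Succ)
  have "totL k 1 (\<lambda>xs. [f xs])" using totL_Cons[OF assms totL_Nil] by simp
  from tot_compL[OF \<open>tot 1 _\<close> this] show ?thesis by simp
qed

lemma tot2: assumes "tot 2 h" "tot k f" "tot k g" shows "tot k (\<lambda>xs. h [f xs, g xs])"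
proof -
  have "totL k 2 (\<lambda>xs. [f xs, g xs])" using totL_Cons[OF assms(2) totL_Cons[OF assms(3) totL_Nil]]
    by (simp add: numeral_2_eq_2)
  from tot_compL[OF assms(1) this] show ?thesis .
qed

lemma tot1: assumes "tot 1 h" "tot k f" shows "tot k (\<lambda>xs. h [f xs])"
proof -
  have "totL k 1 (\<lambda>xs. [f xs])" using totL_Cons[OF assms(2) totL_Nil] by simp
  from tot_compL[OF assms(1) this] show ?thesis .
qed

lemma len2: "length xs = 2 \<longleftrightarrow> (\<exists>a b. xs = [a, b])"
  by (auto simp: length_Suc_conv numeral_2_eq_2)

lemma len2E: assumes "length xs = 2" obtains a b where "xs = [a, b]"
  using assms by (auto simp: length_Suc_conv numeral_2_eq_2)

lemma tot_add: assumes "tot k f" "tot k g" shows "tot k (\<lambda>xs. f xs + g xs)"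
proof -
  have "tot 2 (prec (\<lambda>ys. ys ! 0) (\<lambda>ys. Suc (ys ! 0)))"
    using tot_prim[OF tot_proj[of 0 "Suc 0", simplified] tot_Suc[OF tot_proj[of 0 "Suc (Suc (Suc 0))", simplified]]] by (simp add: numeral_2_eq_2)
  then have "tot 2 (\<lambda>xs. xs ! 0 + xs ! 1)"
  proof (rule tot_cong)
    fix xs :: "nat list" assume "length xs = 2"
    then obtain a b where "xs = [a, b]" by (rule len2E)
    have "prec (\<lambda>ys. ys ! 0) (\<lambda>ys. Suc (ys ! 0)) [a, b] = a + b"
      by (induction a) (simp_all add: prec_def)
    then show "prec (\<lambda>ys. ys ! 0) (\<lambda>ys. Suc (ys ! 0)) xs = xs ! 0 + xs ! 1" using \<open>xs = [a, b]\<close> by simp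
  qed
  from tot2[OF this assms] show ?thesis by simp
qed

lemma tot_mult: assumes "tot k f" "tot k g" shows "tot k (\<lambda>xs. f xs * g xs)"
proof -
  have "tot 2 (prec (\<lambda>ys. 0) (\<lambda>ys. ys ! 0 + ys ! 2))"
    using tot_prim[OF tot_const tot_add[OF tot_proj[of 0 "Suc (Suc (Suc 0))", simplified] tot_proj[of 2 "Suc (Suc (Suc 0))", simplified]]] by (simp add: numeral_2_eq_2)
  then have "tot 2 (\<lambda>xs. xs ! 0 * xs ! 1)"
  proof (rule tot_cong)
    fix xs :: "nat list" assume "length xs = 2"
    then obtain a b where "xs = [a, b]" by (rule len2E)
    have "prec (\<lambda>ys. 0) (\<lambda>ys. ys ! 0 + ys ! 2) [a, b] = a * b"
      by (induction a) (simp_all add: prec_def)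
    then show "prec (\<lambda>ys. 0) (\<lambda>ys. ys ! 0 + ys ! 2) xs = xs ! 0 * xs ! 1" using \<open>xs = [a, b]\<close> by simp
  qed
  from tot2[OF this assms] show ?thesis by simp
qed

lemma tot_sub: assumes "tot k f" "tot k g" shows "tot k (\<lambda>xs. f xs - g xs)"
proof -
  have "tot 1 (prec (\<lambda>ys. 0) (\<lambda>ys. ys ! 1))"
    using tot_prim[OF tot_const[of 0] tot_proj[of 1 "Suc (Suc 0)", simplified]] by simp
  then have p: "tot 1 (\<lambda>xs. xs ! 0 - 1)"
  proof (rule tot_cong)
    fix xs :: "nat list" assume "length xs = 1"
    then obtain a where "xs = [a]" by (auto simp: length_Suc_conv)
    have "prec (\<lambda>ys. 0) (\<lambda>ys. ys ! 1) [a] = a - 1"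
      by (cases a) (simp_all add: prec_def)
    then show "prec (\<lambda>ys. 0) (\<lambda>ys. ys ! 1) xs = xs ! 0 - 1" using \<open>xs = [a]\<close> by simp
  qed
  have "tot 2 (prec (\<lambda>ys. ys ! 0) (\<lambda>ys. ys ! 0 - 1))"
    using tot_prim[OF tot_proj[of 0 "Suc 0", simplified] tot1[OF p tot_proj[of 0 "Suc (Suc (Suc 0))", simplified]]] by (simp add: numeral_2_eq_2)
  then have "tot 2 (\<lambda>xs. xs ! 1 - xs ! 0)"
  proof (rule tot_cong)
    fix xs :: "nat list" assume "length xs = 2"
    then obtain a b where "xs = [a, b]" by (rule len2E)
    have "prec (\<lambda>ys. ys ! 0) (\<lambda>ys. ys ! 0 - 1) [a, b] = b - a"
      by (induction a) (simp_all add: prec_def)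
    then show "prec (\<lambda>ys. ys ! 0) (\<lambda>ys. ys ! 0 - 1) xs = xs ! 1 - xs ! 0" using \<open>xs = [a, b]\<close> by simp
  qed
  from tot2[OF this assms(2,1)] show ?thesis by simp
qed

lemma tot_sum: assumes "tot (Suc k) f" "tot k b" shows "tot k (\<lambda>xs. \<Sum>i<b xs. f (i # xs))"
proof -
  have h: "tot (Suc (Suc k)) (\<lambda>ys. f (ys ! 1 # drop 2 ys))"
    using tot_compL[OF assms(1) totL_Cons[OF tot_proj[of 1 "2 + k"] totL_drop[of 2 k]]] by simp
  have "tot (Suc k) (prec (\<lambda>ys. 0) (\<lambda>ys. ys ! 0 + f (ys ! 1 # drop 2 ys)))"
    using tot_prim[OF tot_const tot_add[OF tot_proj[of 0 "Suc (Suc k)", simplified] h]] by simp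
  then have "tot (Suc k) (\<lambda>xs. \<Sum>i<xs ! 0. f (i # tl xs))"
  proof (rule tot_cong)
    fix xs :: "nat list" assume "length xs = Suc k"
    then obtain a ys where "xs = a # ys" by (auto simp: length_Suc_conv)
    have "prec (\<lambda>ys. 0) (\<lambda>ys. ys ! 0 + f (ys ! 1 # drop 2 ys)) (a # ys) = (\<Sum>i<a. f (i # ys))"
      by (induction a) (simp_all add: prec_def)
    then show "prec (\<lambda>ys. 0) (\<lambda>ys. ys ! 0 + f (ys ! 1 # drop 2 ys)) xs = (\<Sum>i<xs ! 0. f (i # tl xs))"
      using \<open>xs = a # ys\<close> by simp
  qed
  from tot_compL[OF this totL_Cons[OF assms(2) totL_id]] show ?thesis by simp
qed

lemma tot_if_eq: assumes "tot k f1" "tot k f2" "tot k g" "tot k h"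
  shows "tot k (\<lambda>xs. if f1 xs = f2 xs then g xs else h xs)"
proof -
  let ?d = "\<lambda>xs. (f1 xs - f2 xs) + (f2 xs - f1 xs)"
  have "tot k (\<lambda>xs. g xs * (1 - ?d xs) + h xs * (1 - (1 - ?d xs)))"
    by (intro tot_add tot_mult tot_sub tot_const assms)
  then show ?thesis by (rule tot_cong) auto
qed

lemma sum_triangle: "(\<Sum>i<Suc n. i) = triangle n"
  by (induction n) auto

lemma sum_lt_tri: "\<Sum> {..<n::nat} + n = triangle n"
  by (induction n) auto

lemma tot_pe: assumes "tot k f" "tot k g" shows "tot k (\<lambda>xs. prod_encode (f xs, g xs))"
proof -
  have "tot k (\<lambda>xs. (\<Sum>i<Suc (f xs + g xs). (i # xs) ! 0) + f xs)"
    by (intro tot_add tot_sum tot_Suc tot_proj assms) auto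
  then show ?thesis by (rule tot_cong) (simp add: prod_encode_def sum_lt_tri)
qed

lemma pe_eq_iff: "prod_encode (a, b) = n \<longleftrightarrow> a = fst (prod_decode n) \<and> b = snd (prod_decode n)"
proof
  assume h: "prod_encode (a, b) = n"
  have "prod_decode n = (a, b)" unfolding h[symmetric] by simp
  then show "a = fst (prod_decode n) \<and> b = snd (prod_decode n)" by simp
next
  assume "a = fst (prod_decode n) \<and> b = snd (prod_decode n)"
  then have "(a, b) = prod_decode n" by simp
  then show "prod_encode (a, b) = n" by simp
qed

lemma fst_pd_le: "fst (prod_decode n) \<le> n"
  using le_prod_encode_1[of "fst (prod_decode n)" "snd (prod_decode n)"] by simp
lemma snd_pd_le: "snd (prod_decode n) \<le> n"
  using le_prod_encode_2[of "snd (prod_decode n)" "fst (prod_decode n)"] by simp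

lemma double_sum_pd:
  "(\<Sum>a<Suc n. \<Sum>b<Suc n. if prod_encode (a, b) = n then h a b else 0) = (h (fst (prod_decode n)) (snd (prod_decode n)) :: nat)"
proof -
  have "(\<Sum>b<Suc n. if prod_encode (a, b) = n then h a b else 0) =
        (if a = fst (prod_decode n) then h a (snd (prod_decode n)) else 0)" for a
    using snd_pd_le[of n] by (auto simp: pe_eq_iff)
  then show ?thesis using fst_pd_le[of n] by simp
qed

lemma tot_pd1: "tot (Suc 0) (\<lambda>xs. fst (prod_decode (xs ! 0)))" "tot (Suc 0) (\<lambda>xs. snd (prod_decode (xs ! 0)))"
proof -
  have i1: "tot (Suc (Suc (Suc 0))) (\<lambda>ys. if prod_encode (ys!1, ys!0) = ys!2 then ys!1 else 0)"
    by (intro tot_if_eq tot_pe tot_proj tot_const) auto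
  have i2: "tot (Suc (Suc 0)) (\<lambda>zs. \<Sum>b<Suc (zs!1). (\<lambda>ys. if prod_encode (ys!1, ys!0) = ys!2 then ys!1 else 0) (b # zs))"
    by (rule tot_sum[OF i1]) (intro tot_Suc tot_proj, simp)
  have i3: "tot (Suc 0) (\<lambda>xs. \<Sum>a<Suc (xs!0). (\<lambda>zs. \<Sum>b<Suc (zs!1). (\<lambda>ys. if prod_encode (ys!1, ys!0) = ys!2 then ys!1 else 0) (b # zs)) (a # xs))"
    by (rule tot_sum[OF i2]) (intro tot_Suc tot_proj, simp)
  then show "tot (Suc 0) (\<lambda>xs. fst (prod_decode (xs ! 0)))"
    by (rule tot_cong) (simp add: double_sum_pd[where h="\<lambda>a b. a", symmetric] cong: if_cong del: sum.lessThan_Suc)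
  have j1: "tot (Suc (Suc (Suc 0))) (\<lambda>ys. if prod_encode (ys!1, ys!0) = ys!2 then ys!0 else 0)"
    by (intro tot_if_eq tot_pe tot_proj tot_const) auto
  have j2: "tot (Suc (Suc 0)) (\<lambda>zs. \<Sum>b<Suc (zs!1). (\<lambda>ys. if prod_encode (ys!1, ys!0) = ys!2 then ys!0 else 0) (b # zs))"
    by (rule tot_sum[OF j1]) (intro tot_Suc tot_proj, simp)
  have j3: "tot (Suc 0) (\<lambda>xs. \<Sum>a<Suc (xs!0). (\<lambda>zs. \<Sum>b<Suc (zs!1). (\<lambda>ys. if prod_encode (ys!1, ys!0) = ys!2 then ys!0 else 0) (b # zs)) (a # xs))"
    by (rule tot_sum[OF j2]) (intro tot_Suc tot_proj, simp)
  then show "tot (Suc 0) (\<lambda>xs. snd (prod_decode (xs ! 0)))"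
    by (rule tot_cong) (simp add: double_sum_pd[where h="\<lambda>a b. b", symmetric] cong: if_cong del: sum.lessThan_Suc)
qed

lemma tot_fst: "tot k f \<Longrightarrow> tot k (\<lambda>xs. fst (prod_decode (f xs)))"
  using tot1[OF tot_pd1(1)[simplified One_nat_def[symmetric]]] by simp
lemma tot_snd: "tot k f \<Longrightarrow> tot k (\<lambda>xs. snd (prod_decode (f xs)))"
  using tot1[OF tot_pd1(2)[simplified One_nat_def[symmetric]]] by simp

definition get :: "nat \<Rightarrow> nat \<Rightarrow> nat" where
  "get i m = fst (prod_decode (((\<lambda>n. snd (prod_decode n)) ^^ i) m))"

lemma tot_get: assumes "tot k f" "tot k g" shows "tot k (\<lambda>xs. get (f xs) (g xs))"
proof -
  have "tot (Suc (Suc 0)) (prec (\<lambda>ys. ys ! 0) (\<lambda>ys. snd (prod_decode (ys ! 0))))"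
    by (intro tot_prim tot_proj tot_snd) auto
  then have "tot (Suc (Suc 0)) (\<lambda>xs. ((\<lambda>n. snd (prod_decode n)) ^^ (xs ! 0)) (xs ! 1))"
  proof (rule tot_cong)
    fix xs :: "nat list" assume "length xs = Suc (Suc 0)"
    then obtain a b where "xs = [a, b]" by (auto simp: length_Suc_conv)
    have "prec (\<lambda>ys. ys ! 0) (\<lambda>ys. snd (prod_decode (ys ! 0))) [a, b] = ((\<lambda>n. snd (prod_decode n)) ^^ a) b"
      by (induction a) (simp_all add: prec_def)
    then show "prec (\<lambda>ys. ys ! 0) (\<lambda>ys. snd (prod_decode (ys ! 0))) xs = ((\<lambda>n. snd (prod_decode n)) ^^ (xs ! 0)) (xs ! 1)"
      using \<open>xs = [a, b]\<close> by simp
  qed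
  then have "tot 2 (\<lambda>xs. ((\<lambda>n. snd (prod_decode n)) ^^ (xs ! 0)) (xs ! 1))" by (simp add: numeral_2_eq_2)
  from tot_fst[OF tot2[OF this assms]] show ?thesis by (simp add: get_def)
qed

lemma get_Suc: "get (Suc i) (prod_encode (a, m)) = get i m"
  unfolding get_def by (simp only: funpow_Suc_right comp_def prod_encode_inverse snd_conv)

lemma get_0: "get 0 (prod_encode (a, m)) = a"
  unfolding get_def by simp

lemma get_exists: "\<exists>m. \<forall>i<n. get i m = s i"
proof (induction n arbitrary: s)
  case 0 show ?case by simp
next
  case (Suc n)
  obtain m' where m': "\<forall>i<n. get i m' = s (Suc i)" using Suc.IH[of "\<lambda>i. s (Suc i)"] by blast
  have "\<forall>i<Suc n. get i (prod_encode (s 0, m')) = s i"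
  proof (intro allI impI)
    fix i assume i: "i < Suc n"
    show "get i (prod_encode (s 0, m')) = s i"
    proof (cases i)
      case 0 then show ?thesis by (simp add: get_0)
    next
      case (Suc j) then show ?thesis using m' i by (simp add: get_Suc)
    qed
  qed
  then show ?case by blast
qed

lemma tot_drop: "tot k f \<Longrightarrow> tot (n + k) (\<lambda>xs. f (drop n xs))"
  using tot_compL totL_drop by blast

definition rep :: "nat \<Rightarrow> (nat list \<Rightarrow> bool) \<Rightarrow> bool" where
  "rep k R \<longleftrightarrow> (\<exists>C. tot (Suc k) C \<and> (\<forall>xs. length xs = k \<longrightarrow> (R xs \<longleftrightarrow> (\<exists>m. C (m # xs) = 0))))"

lemma rep_cong: "rep k R \<Longrightarrow> (\<And>xs. length xs = k \<Longrightarrow> R xs = R' xs) \<Longrightarrow> rep k R'"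
  unfolding rep_def by metis

lemma totL_tl: "totL (Suc k) k (\<lambda>ys. drop 1 ys)"
  using totL_drop[of 1 k] by simp

lemma tot_shift: "tot (Suc k) C \<Longrightarrow> tot (Suc k) g \<Longrightarrow> tot (Suc k) (\<lambda>ys. C (g ys # drop 1 ys))"
  using tot_compL[OF _ totL_Cons[OF _ totL_tl]] by blast

lemma rep_dec: "tot k \<chi> \<Longrightarrow> rep k (\<lambda>xs. \<chi> xs = 0)"
  unfolding rep_def
  by (rule exI[of _ "\<lambda>ys. \<chi> (drop 1 ys)"]) (use tot_drop[of k \<chi> 1] in simp)

lemma rep_true: "rep k (\<lambda>xs. True)"
  using rep_dec[OF tot_const[of k 0]] by simp

lemma rep_conj: assumes "rep k R1" "rep k R2" shows "rep k (\<lambda>xs. R1 xs \<and> R2 xs)"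
proof -
  obtain C1 where c1: "tot (Suc k) C1" "\<forall>xs. length xs = k \<longrightarrow> (R1 xs \<longleftrightarrow> (\<exists>m. C1 (m # xs) = 0))"
    using assms(1) unfolding rep_def by blast
  obtain C2 where c2: "tot (Suc k) C2" "\<forall>xs. length xs = k \<longrightarrow> (R2 xs \<longleftrightarrow> (\<exists>m. C2 (m # xs) = 0))"
    using assms(2) unfolding rep_def by blast
  let ?C = "\<lambda>ys. C1 (fst (prod_decode (ys ! 0)) # drop 1 ys) + C2 (snd (prod_decode (ys ! 0)) # drop 1 ys)"
  have t: "tot (Suc k) ?C"
    by (rule tot_add[OF tot_shift[OF c1(1) tot_fst[OF tot_proj[of 0 "Suc k", simplified]]]
                        tot_shift[OF c2(1) tot_snd[OF tot_proj[of 0 "Suc k", simplified]]]])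
  have "R1 xs \<and> R2 xs \<longleftrightarrow> (\<exists>m. ?C (m # xs) = 0)" if l: "length xs = k" for xs
  proof
    assume "R1 xs \<and> R2 xs"
    then obtain m1 m2 where "C1 (m1 # xs) = 0" "C2 (m2 # xs) = 0" using c1 c2 l by blast
    then have "?C (prod_encode (m1, m2) # xs) = 0" by simp
    then show "\<exists>m. ?C (m # xs) = 0" by blast
  next
    assume "\<exists>m. ?C (m # xs) = 0"
    then show "R1 xs \<and> R2 xs" using c1 c2 l by auto
  qed
  then show ?thesis unfolding rep_def using t by blast
qed

lemma rep_disj: assumes "rep k R1" "rep k R2" shows "rep k (\<lambda>xs. R1 xs \<or> R2 xs)"
proof -
  obtain C1 where c1: "tot (Suc k) C1" "\<forall>xs. length xs = k \<longrightarrow> (R1 xs \<longleftrightarrow> (\<exists>m. C1 (m # xs) = 0))"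
    using assms(1) unfolding rep_def by blast
  obtain C2 where c2: "tot (Suc k) C2" "\<forall>xs. length xs = k \<longrightarrow> (R2 xs \<longleftrightarrow> (\<exists>m. C2 (m # xs) = 0))"
    using assms(2) unfolding rep_def by blast
  let ?C = "\<lambda>ys. C1 (fst (prod_decode (ys ! 0)) # drop 1 ys) * C2 (snd (prod_decode (ys ! 0)) # drop 1 ys)"
  have t: "tot (Suc k) ?C"
    by (rule tot_mult[OF tot_shift[OF c1(1) tot_fst[OF tot_proj[of 0 "Suc k", simplified]]]
                        tot_shift[OF c2(1) tot_snd[OF tot_proj[of 0 "Suc k", simplified]]]])
  have "R1 xs \<or> R2 xs \<longleftrightarrow> (\<exists>m. ?C (m # xs) = 0)" if l: "length xs = k" for xs
  proof
    assume "R1 xs \<or> R2 xs"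
    then show "\<exists>m. ?C (m # xs) = 0"
    proof
      assume "R1 xs"
      then obtain m1 where "C1 (m1 # xs) = 0" using c1 l by blast
      then have "?C (prod_encode (m1, 0) # xs) = 0" by simp
      then show ?thesis by blast
    next
      assume "R2 xs"
      then obtain m2 where "C2 (m2 # xs) = 0" using c2 l by blast
      then have "?C (prod_encode (0, m2) # xs) = 0" by simp
      then show ?thesis by blast
    qed
  next
    assume "\<exists>m. ?C (m # xs) = 0"
    then show "R1 xs \<or> R2 xs" using c1 c2 l by auto
  qed
  then show ?thesis unfolding rep_def using t by blast
qed

lemma rep_ex: assumes "rep (Suc k) R" shows "rep k (\<lambda>xs. \<exists>n. R (n # xs))"
proof -
  obtain C where c: "tot (Suc (Suc k)) C" "\<forall>xs. length xs = Suc k \<longrightarrow> (R xs \<longleftrightarrow> (\<exists>m. C (m # xs) = 0))"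
    using assms unfolding rep_def by blast
  let ?C = "\<lambda>ys. C (fst (prod_decode (ys ! 0)) # snd (prod_decode (ys ! 0)) # drop 1 ys)"
  have t: "tot (Suc k) ?C"
    by (intro tot_compL[OF c(1)] totL_Cons totL_tl tot_fst tot_snd tot_proj) auto
  have "(\<exists>n. R (n # xs)) \<longleftrightarrow> (\<exists>m. ?C (m # xs) = 0)" if l: "length xs = k" for xs
  proof
    assume "\<exists>n. R (n # xs)"
    then obtain n m where "C (m # n # xs) = 0" using c l by auto
    then have "?C (prod_encode (m, n) # xs) = 0" by simp
    then show "\<exists>m. ?C (m # xs) = 0" by blast
  next
    assume "\<exists>m. ?C (m # xs) = 0"
    then show "\<exists>n. R (n # xs)" using c l by auto
  qed
  then show ?thesis unfolding rep_def using t by blast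
qed

lemma rep_subst: assumes "rep m R" "totL k m G" shows "rep k (\<lambda>xs. R (G xs))"
proof -
  obtain C where c: "tot (Suc m) C" "\<forall>xs. length xs = m \<longrightarrow> (R xs \<longleftrightarrow> (\<exists>w. C (w # xs) = 0))"
    using assms(1) unfolding rep_def by blast
  let ?C = "\<lambda>ys. C (ys ! 0 # G (drop 1 ys))"
  have t: "tot (Suc k) ?C"
    by (intro tot_compL[OF c(1)] totL_Cons totL_comp[OF assms(2)] totL_tl tot_proj) auto
  have "length (G xs) = m" if "length xs = k" for xs using assms(2) that unfolding totL_def by blast
  then have "R (G xs) \<longleftrightarrow> (\<exists>w. ?C (w # xs) = 0)" if "length xs = k" for xs
    using c that by auto
  then show ?thesis unfolding rep_def using t by blast
qed

lemma rep_ball: assumes "rep (Suc k) R" "tot k b" shows "rep k (\<lambda>xs. \<forall>i<b xs. R (i # xs))"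
proof -
  obtain C where c: "tot (Suc (Suc k)) C" "\<forall>xs. length xs = Suc k \<longrightarrow> (R xs \<longleftrightarrow> (\<exists>m. C (m # xs) = 0))"
    using assms unfolding rep_def by blast
  let ?F = "\<lambda>zs. C (get (zs ! 0) (zs ! 1) # zs ! 0 # drop 2 zs)"
  have tF: "tot (Suc (Suc k)) ?F"
    by (intro tot_compL[OF c(1)] totL_Cons tot_get tot_proj) (auto intro: totL_drop[of 2 k, simplified])
  let ?C = "\<lambda>ys. \<Sum>i<b (drop 1 ys). ?F (i # ys)"
  have t: "tot (Suc k) ?C"
    by (rule tot_sum[OF tF]) (use tot_drop[OF assms(2), of 1] in simp)
  have "(\<forall>i<b xs. R (i # xs)) \<longleftrightarrow> (\<exists>m. ?C (m # xs) = 0)" if l: "length xs = k" for xs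
  proof
    assume "\<forall>i<b xs. R (i # xs)"
    then have "\<forall>i<b xs. \<exists>w. C (w # i # xs) = 0" using c l by auto
    then obtain s where s: "\<forall>i<b xs. C (s i # i # xs) = 0" by metis
    obtain m where "\<forall>i<b xs. get i m = s i" using get_exists by blast
    then have "?C (m # xs) = 0" using s by simp
    then show "\<exists>m. ?C (m # xs) = 0" by blast
  next
    assume "\<exists>m. ?C (m # xs) = 0"
    then obtain m where "\<forall>i<b xs. C (get i m # i # xs) = 0" by auto
    then show "\<forall>i<b xs. R (i # xs)" using c l by auto
  qed
  then show ?thesis unfolding rep_def using t by blast
qed

lemma rep_all_fin: "(\<And>i. i < (n::nat) \<Longrightarrow> rep k (R i)) \<Longrightarrow> rep k (\<lambda>xs. \<forall>i<n. R i xs)"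
proof (induction n)
  case 0 then show ?case using rep_true by simp
next
  case (Suc n)
  have "rep k (\<lambda>xs. (\<forall>i<n. R i xs) \<and> R n xs)" using Suc by (intro rep_conj) auto
  then show ?case by (rule rep_cong) (auto simp: less_Suc_eq)
qed

lemma rep_exl: "rep (n + j) R \<Longrightarrow> rep j (\<lambda>xs. \<exists>us. length us = n \<and> R (us @ xs))"
proof (induction n arbitrary: R)
  case 0 then have "rep j R" by simp
  then show ?case by (rule rep_cong) simp
next
  case (Suc n)
  have "rep (n + j) (\<lambda>ws. \<exists>y. R (y # ws))" using rep_ex Suc.prems by simp
  from Suc.IH[OF this] show ?case
    by (rule rep_cong) (metis append_Cons length_Suc_conv)
qed

lemma evZero: "eval Zero xs y \<longleftrightarrow> y = 0"
  by (auto elim: evalZeroE intro: eval_Zero)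

lemma evSucc: "eval Succ xs y \<longleftrightarrow> xs \<noteq> [] \<and> y = Suc (hd xs)"
  by (cases xs) (auto elim: evalSuccE intro: eval_Succ)

lemma evProj: "eval (Proj i) xs y \<longleftrightarrow> i < length xs \<and> y = xs ! i"
  by (auto elim: evalProjE intro: eval_Proj)

lemma evComp: "eval (Comp f gs) xs z \<longleftrightarrow>
   (\<exists>us. length us = length gs \<and> (\<forall>i<length gs. eval (gs ! i) xs (us ! i)) \<and> eval f us z)"
  by (auto elim: evalCompE intro: eval_Comp)

lemma evMn: "eval (Mn f) xs n \<longleftrightarrow> eval f (n # xs) 0 \<and> (\<forall>m<n. \<exists>k. k \<noteq> 0 \<and> eval f (m # xs) k)"
  by (auto elim: evalMnE intro: eval_Mn)

lemma evPrim0: "\<not> eval (Prim f g) [] z"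
  by (auto elim: evalPrimNilE)

lemma evPrim: "eval (Prim f g) (n # xs) z \<longleftrightarrow>
   (\<exists>s. eval f xs (s 0) \<and> (\<forall>i<n. eval g (s i # i # xs) (s (Suc i))) \<and> s n = z)"
proof (induction n arbitrary: z)
  case 0
  show ?case
  proof
    assume "eval (Prim f g) (0 # xs) z"
    then have "eval f xs z" by (auto elim: evalPrim0E)
    then show "\<exists>s. eval f xs (s 0) \<and> (\<forall>i<0. eval g (s i # i # xs) (s (Suc i))) \<and> s 0 = z"
      by (intro exI[of _ "\<lambda>_. z"]) simp
  qed (auto intro: eval_Prim0)
next
  case (Suc n)
  show ?case
  proof
    assume "eval (Prim f g) (Suc n # xs) z"
    then obtain y where y: "eval (Prim f g) (n # xs) y" "eval g (y # n # xs) z"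
      by (auto elim: evalPrimSE)
    then obtain s where s: "eval f xs (s 0)" "\<forall>i<n. eval g (s i # i # xs) (s (Suc i))" "s n = y"
      using Suc.IH by blast
    let ?s = "s(Suc n := z)"
    have "\<forall>i<Suc n. eval g (?s i # i # xs) (?s (Suc i))"
      using s y by (auto simp: less_Suc_eq)
    then show "\<exists>s. eval f xs (s 0) \<and> (\<forall>i<Suc n. eval g (s i # i # xs) (s (Suc i))) \<and> s (Suc n) = z"
      using s by (intro exI[of _ ?s]) auto
  next
    assume "\<exists>s. eval f xs (s 0) \<and> (\<forall>i<Suc n. eval g (s i # i # xs) (s (Suc i))) \<and> s (Suc n) = z"
    then obtain s where s: "eval f xs (s 0)" "\<forall>i<Suc n. eval g (s i # i # xs) (s (Suc i))" "s (Suc n) = z"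
      by blast
    then have "eval (Prim f g) (n # xs) (s n)" using Suc.IH by auto
    then show "eval (Prim f g) (Suc n # xs) z" using s by (auto intro: eval_PrimS)
  qed
qed

lemma evPrim_get: "eval (Prim f g) (n # xs) z \<longleftrightarrow>
   (\<exists>m. eval f xs (get 0 m) \<and> (\<forall>i<n. eval g (get i m # i # xs) (get (Suc i) m)) \<and> get n m = z)"
proof
  assume "eval (Prim f g) (n # xs) z"
  then obtain s where s: "eval f xs (s 0)" "\<forall>i<n. eval g (s i # i # xs) (s (Suc i))" "s n = z"
    using evPrim by blast
  obtain m where m: "\<forall>i<Suc (Suc n). get i m = s i" using get_exists by blast
  show "\<exists>m. eval f xs (get 0 m) \<and> (\<forall>i<n. eval g (get i m # i # xs) (get (Suc i) m)) \<and> get n m = z"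
    using s m by (intro exI[of _ m]) auto
next
  assume "\<exists>m. eval f xs (get 0 m) \<and> (\<forall>i<n. eval g (get i m # i # xs) (get (Suc i) m)) \<and> get n m = z"
  then obtain m where m: "eval f xs (get 0 m)" "\<forall>i<n. eval g (get i m # i # xs) (get (Suc i) m)" "get n m = z"
    by blast
  show "eval (Prim f g) (n # xs) z" unfolding evPrim
    by (rule exI[of _ "\<lambda>i. get i m"]) (use m in simp)
qed

definition df :: "nat \<Rightarrow> nat \<Rightarrow> nat" where "df a b = (a - b) + (b - a)"
lemma df0[simp]: "df a b = 0 \<longleftrightarrow> a = b" by (auto simp: df_def)
lemma tot_df: "tot k f \<Longrightarrow> tot k g \<Longrightarrow> tot k (\<lambda>xs. df (f xs) (g xs))"
  unfolding df_def by (intro tot_add tot_sub)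

lemma len_Suc: "length ys = Suc k \<Longrightarrow> \<exists>y xs. ys = y # xs \<and> length xs = k"
  by (simp add: length_Suc_conv)

abbreviation ER :: "recf \<Rightarrow> nat list \<Rightarrow> bool" where
  "ER r ys \<equiv> eval r (drop 1 ys) (ys ! 0)"

lemma main_rep: "rep (Suc k) (ER r)"
proof (induction r arbitrary: k)
  case Zero
  have "rep (Suc k) (\<lambda>ys. ys ! 0 = 0)" by (intro rep_dec tot_proj) simp
  then show ?case by (rule rep_cong) (simp add: evZero)
next
  case Succ
  show ?case
  proof (cases k)
    case 0
    have "rep (Suc k) (\<lambda>ys. (1::nat) = 0)" by (intro rep_dec tot_const)
    then show ?thesis by (rule rep_cong) (use 0 in \<open>auto simp: evSucc length_Suc_conv\<close>)
  next
    case (Suc k')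
    have "rep (Suc k) (\<lambda>ys. df (ys ! 0) (Suc (ys ! 1)) = 0)"
      by (intro rep_dec tot_df tot_proj tot_Suc) (auto simp: Suc)
    then show ?thesis by (rule rep_cong) (use Suc in \<open>auto simp: evSucc length_Suc_conv\<close>)
  qed
next
  case (Proj i)
  show ?case
  proof (cases "i < k")
    case False
    have "rep (Suc k) (\<lambda>ys. (1::nat) = 0)" by (intro rep_dec tot_const)
    then show ?thesis by (rule rep_cong) (use False in \<open>auto simp: evProj\<close>)
  next
    case True
    have "rep (Suc k) (\<lambda>ys. df (ys ! 0) (ys ! Suc i) = 0)"
      by (intro rep_dec tot_df tot_proj) (auto simp: True)
    then show ?thesis by (rule rep_cong) (use True in \<open>auto simp: evProj length_Suc_conv\<close>)
  qed
next
  case (Comp f gs)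
  let ?n = "length gs"
  have gi: "rep (Suc k') (ER (gs ! i))" if "i < ?n" for i k' using Comp.IH(2) that by simp
  have A: "rep (?n + Suc k) (\<lambda>ws. \<forall>i<?n. eval (gs ! i) (drop (Suc ?n) ws) (ws ! i))"
  proof (rule rep_all_fin)
    fix i assume i: "i < ?n"
    have t: "totL (?n + Suc k) (Suc k) (\<lambda>ws. ws ! i # drop (Suc ?n) ws)"
      using totL_Cons[OF tot_proj[of i "Suc ?n + k"] totL_drop[of "Suc ?n" k]] i by simp
    from rep_subst[OF gi[OF i] t] show "rep (?n + Suc k) (\<lambda>ws. eval (gs ! i) (drop (Suc ?n) ws) (ws ! i))"
      by simp
  qed
  have t2: "totL (?n + Suc k) (Suc ?n) (\<lambda>ws. ws ! ?n # take ?n ws)"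
    using totL_Cons[OF tot_proj[of ?n "?n + Suc k"] totL_take[of ?n "?n + Suc k"]] by simp
  have B: "rep (?n + Suc k) (\<lambda>ws. eval f (take ?n ws) (ws ! ?n))"
    using rep_subst[OF Comp.IH(1)[of ?n] t2] by simp
  have "rep (Suc k) (\<lambda>zs. \<exists>us. length us = ?n \<and> ((\<lambda>ws. (\<forall>i<?n. eval (gs ! i) (drop (Suc ?n) ws) (ws ! i))
         \<and> eval f (take ?n ws) (ws ! ?n)) (us @ zs)))"
    by (rule rep_exl) (rule rep_conj[OF A B])
  then show ?case
  proof (rule rep_cong)
    fix ys :: "nat list" assume "length ys = Suc k"
    then obtain z xs where ys: "ys = z # xs" using len_Suc by blast
    show "(\<exists>us. length us = ?n \<and> ((\<lambda>ws. (\<forall>i<?n. eval (gs ! i) (drop (Suc ?n) ws) (ws ! i))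
         \<and> eval f (take ?n ws) (ws ! ?n)) (us @ ys))) = ER (Comp f gs) ys"
    proof -
      have h: "((\<lambda>ws. (\<forall>i<?n. eval (gs ! i) (drop (Suc ?n) ws) (ws ! i))
         \<and> eval f (take ?n ws) (ws ! ?n)) (us @ z # xs)) \<longleftrightarrow>
         (\<forall>i<?n. eval (gs ! i) xs (us ! i)) \<and> eval f us z" if "length us = ?n" for us
        using that by (simp add: nth_append)
      show ?thesis unfolding ys evComp drop_Suc_Cons nth_Cons_0
        using h by (metis (no_types, lifting) One_nat_def drop0 drop_Suc_Cons)
    qed
  qed
next
  case (Prim f g)
  show ?case
  proof (cases k)
    case 0
    have "rep (Suc k) (\<lambda>ys. (1::nat) = 0)" by (intro rep_dec tot_const)
    then show ?thesis by (rule rep_cong) (use 0 in \<open>auto simp: evPrim0 length_Suc_conv\<close>)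
  next
    case (Suc k')
    define d3 where "d3 = Suc (Suc (Suc 0))"
    define d4 where "d4 = Suc d3"
    have tA: "totL (Suc (Suc (Suc k'))) (Suc k') (\<lambda>ws. get 0 (ws ! 0) # drop d3 ws)"
      using totL_Cons[OF tot_get[OF tot_const tot_proj[of 0 "d3 + k'"]] totL_drop[of d3 k']]
      by (simp add: d3_def)
    have A: "rep (Suc (Suc (Suc k'))) (\<lambda>ws. eval f (drop d3 ws) (get 0 (ws ! 0)))"
      using rep_subst[OF Prim.IH(1)[of k'] tA] by simp
    have tB: "totL (Suc (Suc (Suc (Suc k')))) (Suc (Suc (Suc k')))
       (\<lambda>vs. get (Suc (vs ! 0)) (vs ! 1) # get (vs ! 0) (vs ! 1) # vs ! 0 # drop d4 vs)"
      by (intro totL_Cons tot_get tot_Suc tot_proj) (use totL_drop[of d4 k'] in \<open>simp_all add: d4_def d3_def\<close>)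
    have B0: "rep (Suc (Suc (Suc (Suc k')))) (\<lambda>vs. eval g (get (vs ! 0) (vs ! 1) # vs ! 0 # drop d4 vs) (get (Suc (vs ! 0)) (vs ! 1)))"
      using rep_subst[OF Prim.IH(2)[of "Suc (Suc k')"] tB] by simp
    have B: "rep (Suc (Suc (Suc k'))) (\<lambda>ws. \<forall>i<ws ! 2. eval g (get i (ws ! 0) # i # drop d3 ws) (get (Suc i) (ws ! 0)))"
      using rep_ball[OF B0 tot_proj[of 2 "Suc (Suc (Suc k'))"]] by (simp add: d4_def)
    have C: "rep (Suc (Suc (Suc k'))) (\<lambda>ws. df (get (ws ! 2) (ws ! 0)) (ws ! 1) = 0)"
      by (intro rep_dec tot_df tot_get tot_proj) auto
    have "rep (Suc (Suc k')) (\<lambda>ys. \<exists>m. (\<lambda>ws. eval f (drop d3 ws) (get 0 (ws ! 0)) \<and>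
        (\<forall>i<ws ! 2. eval g (get i (ws ! 0) # i # drop d3 ws) (get (Suc i) (ws ! 0))) \<and>
        df (get (ws ! 2) (ws ! 0)) (ws ! 1) = 0) (m # ys))"
      by (rule rep_ex) (intro rep_conj A B C)
    then show ?thesis unfolding Suc
    proof (rule rep_cong)
      fix ys :: "nat list" assume "length ys = Suc (Suc k')"
      then obtain z n xs where ys: "ys = z # n # xs" by (auto simp: length_Suc_conv)
      show "(\<exists>m. (\<lambda>ws. eval f (drop d3 ws) (get 0 (ws ! 0)) \<and>
        (\<forall>i<ws ! 2. eval g (get i (ws ! 0) # i # drop d3 ws) (get (Suc i) (ws ! 0))) \<and>
        df (get (ws ! 2) (ws ! 0)) (ws ! 1) = 0) (m # ys)) = ER (Prim f g) ys"
        unfolding ys by (simp add: evPrim_get d3_def numeral_2_eq_2)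
    qed
  qed
next
  case (Mn f)
  define d3 where "d3 = Suc (Suc (Suc 0))"
  have A: "rep (Suc k) (\<lambda>ys. eval f ys 0)"
    using rep_subst[OF Mn.IH[of "Suc k"] totL_Cons[OF tot_const totL_id]] by simp
  have tB: "totL (Suc (Suc (Suc k))) (Suc (Suc k)) (\<lambda>vs. vs ! 0 # vs ! 1 # drop d3 vs)"
    by (intro totL_Cons tot_proj) (use totL_drop[of d3 "k"] in \<open>simp_all add: d3_def\<close>)
  have B1: "rep (Suc (Suc (Suc k))) (\<lambda>vs. eval f (vs ! 1 # drop d3 vs) (vs ! 0))"
    using rep_subst[OF Mn.IH[of "Suc k"] tB] by simp
  have B2: "rep (Suc (Suc (Suc k))) (\<lambda>vs. 1 - vs ! 0 = 0)"
    by (intro rep_dec tot_sub tot_const tot_proj) simp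
  have B3: "rep (Suc (Suc k)) (\<lambda>ws. \<exists>j. (\<lambda>vs. (1 - vs ! 0 = 0) \<and> eval f (vs ! 1 # drop d3 vs) (vs ! 0)) (j # ws))"
    by (rule rep_ex) (rule rep_conj[OF B2 B1])
  have B: "rep (Suc k) (\<lambda>ys. \<forall>m<ys ! 0. \<exists>j. (\<lambda>vs. (1 - vs ! 0 = 0) \<and> eval f (vs ! 1 # drop d3 vs) (vs ! 0)) (j # m # ys))"
    using rep_ball[OF B3 tot_proj[of 0 "Suc k"]] by simp
  have "rep (Suc k) (\<lambda>ys. eval f ys 0 \<and> (\<forall>m<ys ! 0. \<exists>j. (\<lambda>vs. (1 - vs ! 0 = 0) \<and> eval f (vs ! 1 # drop d3 vs) (vs ! 0)) (j # m # ys)))"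
    by (rule rep_conj[OF A B])
  then show ?case
  proof (rule rep_cong)
    fix ys :: "nat list" assume "length ys = Suc k"
    then obtain n xs where ys: "ys = n # xs" using len_Suc by blast
    show "(eval f ys 0 \<and> (\<forall>m<ys ! 0. \<exists>j. (\<lambda>vs. (1 - vs ! 0 = 0) \<and> eval f (vs ! 1 # drop d3 vs) (vs ! 0)) (j # m # ys))) = ER (Mn f) ys"
      unfolding ys by (simp add: evMn d3_def Suc_le_eq)
  qed
qed

lemma chain_max:
  assumes "finite V" "V \<noteq> {}" "\<forall>a\<in>V. \<forall>b\<in>V. a = b \<or> lt a b \<or> lt b a"
    and tr: "\<forall>x y z. lt x y \<longrightarrow> lt y z \<longrightarrow> lt x z"
  shows "\<exists>v\<in>V. \<forall>w\<in>V. w = v \<or> lt w v"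
  using assms(1,2,3)
proof (induction V rule: finite_ne_induct)
  case (singleton x) then show ?case by simp
next
  case (insert x F)
  then obtain v where v: "v \<in> F" "\<forall>w\<in>F. w = v \<or> lt w v" by auto
  have "x = v \<or> lt x v \<or> lt v x" using insert.prems v(1) by auto
  then show ?case
  proof (elim disjE)
    assume "lt v x"
    have "\<forall>w\<in>insert x F. w = x \<or> lt w x"
    proof
      fix w assume w: "w \<in> insert x F"
      show "w = x \<or> lt w x"
      proof (cases "w = x")
        case False
        then have "w \<in> F" using w by simp
        then have "w = v \<or> lt w v" using v by blast
        then show ?thesis using \<open>lt v x\<close> tr by metis
      qed simp
    qed
    then show ?thesis by blast
  qed (use v in auto)
qed

lemma maxD_char:
  assumes irr: "\<forall>x. \<not> lt x x" and tr: "\<forall>x y z. lt x y \<longrightarrow> lt y z \<longrightarrow> lt x z"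
    and mono: "\<forall>t t' a b. t \<le> t' \<longrightarrow> f x t = Some a \<longrightarrow> f x t' = Some b \<longrightarrow> (a = b \<or> lt a b)"
  shows "maxD lt f x = Some d \<longleftrightarrow> d \<in> values_at f x \<and> (\<forall>w\<in>values_at f x. w = d \<or> lt w d)"
proof -
  let ?V = "values_at f x"
  let ?P = "\<lambda>v. v \<in> ?V \<and> (\<forall>w\<in>?V. w = v \<or> lt w v)"
  have uniq: "a = b" if "?P a" "?P b" for a b
    using that irr tr by metis
  show ?thesis
  proof
    assume m: "maxD lt f x = Some d"
    then have fin: "finite ?V" "?V \<noteq> {}" and d: "d = (THE v. ?P v)"
      unfolding maxD_def by (auto split: if_splits)
    have ch: "\<forall>a\<in>?V. \<forall>b\<in>?V. a = b \<or> lt a b \<or> lt b a"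
    proof (intro ballI)
      fix a b assume "a \<in> ?V" "b \<in> ?V"
      then obtain t t' where "f x t = Some a" "f x t' = Some b" unfolding values_at_def by auto
      then show "a = b \<or> lt a b \<or> lt b a" using mono by (metis nat_le_linear)
    qed
    obtain v where v: "?P v" using chain_max[OF fin ch tr] by blast
    have "?P (THE v. ?P v)"
    proof (rule theI[where a=v])
      show "?P v" by (rule v)
      fix y assume "?P y" then show "y = v" using uniq v by blast
    qed
    then show "?P d" using d by simp
  next
    assume pd: "?P d"
    then obtain t0 where t0: "f x t0 = Some d" unfolding values_at_def by auto
    have sub: "?V \<subseteq> insert d ((\<lambda>t. the (f x t)) ` {..<t0})"
    proof
      fix v assume "v \<in> ?V"
      then obtain t where t: "f x t = Some v" unfolding values_at_def by auto
      show "v \<in> insert d ((\<lambda>t. the (f x t)) ` {..<t0})"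
      proof (cases "t < t0")
        case True then show ?thesis using t by (auto intro: image_eqI[where x=t])
      next
        case False
        then have "d = v \<or> lt d v" using mono t0 t by (meson not_less)
        moreover have "v = d \<or> lt v d" using pd \<open>v \<in> ?V\<close> by blast
        ultimately show ?thesis using irr tr by blast
      qed
    qed
    have "finite ?V" by (rule finite_subset[OF sub]) simp
    moreover have "?V \<noteq> {}" using pd by blast
    moreover have "(THE v. ?P v) = d"
    proof (rule the_equality)
      show "?P d" by (rule pd)
      fix y assume "?P y" then show "y = d" using uniq pd by blast
    qed
    ultimately show "maxD lt f x = Some d" unfolding maxD_def by simp
  qed
qed

lemma tot_of_computable: assumes "computable_set L"
  shows "tot 1 (\<lambda>xs. if xs ! 0 \<in> L then 1 else 0)"
proof -
  obtain r where r: "\<forall>x y. eval r [x] y \<longleftrightarrow> Some (if x \<in> L then 1 else 0) = Some y"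
    using assms unfolding computable_set_def partrec_def by blast
  show ?thesis unfolding tot_def
    by (rule exI[of _ r]) (auto simp: length_Suc_conv r)
qed

lemma computable_of_tot: assumes "tot 1 h" "\<And>x. h [x] = (if x \<in> L then 1 else 0)"
  shows "computable_set L"
proof -
  obtain r where r: "\<forall>xs. length xs = 1 \<longrightarrow> eval r xs (h xs)" using assms(1) unfolding tot_def by blast
  have "eval r [x] y \<longleftrightarrow> Some (if x \<in> L then 1 else 0) = Some y" for x y
    using r[rule_format, of "[x]"] assms(2)[of x] eval_det by auto
  then show ?thesis unfolding computable_set_def partrec_def by blast
qed

lemma Sigma1_of_rep: assumes "rep 1 R" shows "Sigma 1 {c. R [c]}"
proof -
  obtain C where c: "tot 2 C" "\<forall>xs. length xs = 1 \<longrightarrow> (R xs \<longleftrightarrow> (\<exists>m. C (m # xs) = 0))"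
    using assms unfolding rep_def by (auto simp: numeral_2_eq_2)
  let ?P = "{n. C [snd (prod_decode n), fst (prod_decode n)] = 0}"
  have t: "tot 1 (\<lambda>xs. if C [snd (prod_decode (xs ! 0)), fst (prod_decode (xs ! 0))] = 0 then 0 else 1)"
    by (intro tot_if_eq tot2[OF c(1)] tot_snd tot_fst tot_proj tot_const) auto
  have cs: "computable_set (- ?P)" by (rule computable_of_tot[OF t]) simp
  have eq: "{c. R [c]} = {c. \<exists>m. prod_encode (c, m) \<in> ?P}"
    using c(2) by auto
  show ?thesis unfolding One_nat_def
    by (rule Sigma.simps(2)[THEN iffD2], rule exI[of _ ?P]) (use cs eq in simp)
qed

lemma Sigma2_of_rep: assumes "rep 1 R" shows "Sigma 2 {c. \<exists>m. \<not> R [prod_encode (c, m)]}"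
proof -
  let ?P = "- {n. R [n]}"
  have s1: "Sigma 1 (- ?P)" using Sigma1_of_rep[OF assms] by simp
  have eq: "{c. \<exists>m. \<not> R [prod_encode (c, m)]} = {c. \<exists>m. prod_encode (c, m) \<in> ?P}" by auto
  show ?thesis unfolding numeral_2_eq_2
    by (rule Sigma.simps(2)[THEN iffD2], rule exI[of _ ?P]) (use s1 eq in \<open>simp only: One_nat_def\<close>)
qed

declare Sigma.simps[simp del]

lemma max_case:
  fixes ks :: "bkind list" and lt :: "'d \<Rightarrow> 'd \<Rightarrow> bool" and \<rho> :: "nat \<Rightarrow> 'd"
    and g :: "bval list \<Rightarrow> 'd option" and f :: "bval list \<Rightarrow> nat \<Rightarrow> 'd option"
  assumes bij: "bij \<rho>" and irr: "\<forall>x. \<not> lt x x" and tr: "\<forall>x y z. lt x y \<longrightarrow> lt y z \<longrightarrow> lt x z"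
    and chi: "tot 2 \<chi>" "\<forall>a b. \<chi> [a, b] = 0 \<longleftrightarrow> lt (\<rho> a) (\<rho> b)"
    and pc: "pcomp2 ks \<rho> f" and mono: "mono_incr ks lt f" and gx: "\<forall>x\<in>bspace ks. g x = maxD lt f x"
  shows "rel_Sigma1_and_Pi1 ks \<rho> (graph_on ks g) \<and> set_Sigma 2 ks (dom_on ks g)"
proof -
  obtain \<phi> where "partrec \<phi>" and h\<phi>: "\<forall>x\<in>bspace ks. \<forall>t. \<phi> (prod_encode (code x, t)) = map_option (inv \<rho>) (f x t)"
    using pc unfolding pcomp2_def by blast
  then obtain r where hr: "\<forall>n y. eval r [n] y \<longleftrightarrow> \<phi> n = Some y" unfolding partrec_def by blast
  have invr: "inv \<rho> (\<rho> m) = m" for m using bij by (simp add: bij_is_inj)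
  have rinv: "\<rho> (inv \<rho> d) = d" for d using bij by (simp add: bij_is_surj surj_f_inv_f)
  have fe: "f x t = Some (\<rho> m) \<longleftrightarrow> eval r [prod_encode (code x, t)] m" if x: "x \<in> bspace ks" for x t m
  proof (cases "f x t")
    case None then show ?thesis using hr h\<phi> x by simp
  next
    case (Some d)
    have "inv \<rho> d = m \<longleftrightarrow> d = \<rho> m" using invr rinv by metis
    then show ?thesis using hr h\<phi> x Some by auto
  qed
  define Vn where "Vn c m \<longleftrightarrow> (\<exists>t. eval r [prod_encode (c, t)] m)" for c m
  define Up where "Up c m \<longleftrightarrow> (\<forall>t v. eval r [prod_encode (c, t)] v \<longrightarrow> v = m \<or> lt (\<rho> v) (\<rho> m))" for c m
  have gr: "g x = Some (\<rho> m) \<longleftrightarrow> Vn (code x) m \<and> Up (code x) m" if x: "x \<in> bspace ks" for x m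
  proof -
    have mx: "\<forall>t t' a b. t \<le> t' \<longrightarrow> f x t = Some a \<longrightarrow> f x t' = Some b \<longrightarrow> (a = b \<or> lt a b)"
      using mono x unfolding mono_incr_def by blast
    have 1: "\<rho> m \<in> values_at f x \<longleftrightarrow> Vn (code x) m"
      unfolding values_at_def Vn_def using fe[OF x] by auto
    have 2: "(\<forall>w\<in>values_at f x. w = \<rho> m \<or> lt w (\<rho> m)) \<longleftrightarrow> Up (code x) m"
    proof
      assume a: "\<forall>w\<in>values_at f x. w = \<rho> m \<or> lt w (\<rho> m)"
      show "Up (code x) m" unfolding Up_def
      proof (intro allI impI)
        fix t v assume "eval r [prod_encode (code x, t)] v"
        then have "\<rho> v \<in> values_at f x" using fe[OF x] unfolding values_at_def by blast
        then show "v = m \<or> lt (\<rho> v) (\<rho> m)" using a invr by metis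
      qed
    next
      assume a: "Up (code x) m"
      show "\<forall>w\<in>values_at f x. w = \<rho> m \<or> lt w (\<rho> m)"
      proof
        fix w assume "w \<in> values_at f x"
        then obtain t where "f x t = Some (\<rho> (inv \<rho> w))" unfolding values_at_def using rinv by auto
        then have "eval r [prod_encode (code x, t)] (inv \<rho> w)" using fe[OF x] by blast
        then show "w = \<rho> m \<or> lt w (\<rho> m)" using a rinv unfolding Up_def by metis
      qed
    qed
    show ?thesis using gx x maxD_char[where lt=lt and f=f and x=x and d="\<rho> m", OF irr tr mx] 1 2 by simp
  qed
  
  have E2: "rep (Suc (Suc 0)) (\<lambda>ys. eval r [ys ! 1] (ys ! 0))"
    using main_rep[of "Suc 0" r] by (rule rep_cong) (auto simp: length_Suc_conv)
  then obtain C where Ct: "tot (Suc (Suc (Suc 0))) C"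
    and Cc: "\<forall>xs. length xs = Suc (Suc 0) \<longrightarrow> (eval r [xs ! 1] (xs ! 0) \<longleftrightarrow> (\<exists>w. C (w # xs) = 0))"
    unfolding rep_def by blast
  have Cev: "eval r [n] m \<longleftrightarrow> (\<exists>w. C [w, m, n] = 0)" for n m
    using Cc[rule_format, of "[m, n]"] by simp
  have VnR: "rep (Suc (Suc 0)) (\<lambda>ys. Vn (ys ! 0) (ys ! 1))"
  proof -
    have t: "totL (Suc (Suc (Suc 0))) (Suc (Suc 0)) (\<lambda>vs. [vs ! 2, prod_encode (vs ! 1, vs ! 0)])"
      by (intro totL_Cons totL_Nil tot_proj tot_pe) auto
    have "rep (Suc (Suc 0)) (\<lambda>ys. \<exists>t. (\<lambda>vs. eval r [prod_encode (vs ! 1, vs ! 0)] (vs ! 2)) (t # ys))"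
      using rep_ex[OF rep_subst[OF E2 t]] by simp
    then show ?thesis by (rule rep_cong) (auto simp: Vn_def length_Suc_conv)
  qed
  define NU where "NU c m \<longleftrightarrow> (\<exists>t v. eval r [prod_encode (c, t)] v \<and> v \<noteq> m \<and> \<not> lt (\<rho> v) (\<rho> m))" for c m
  have NUUp: "\<not> Up c m \<longleftrightarrow> NU c m" for c m unfolding NU_def Up_def by blast
  have NUR: "rep (Suc (Suc 0)) (\<lambda>ys. NU (ys ! 0) (ys ! 1))"
  proof -
    let ?k = "Suc (Suc (Suc (Suc 0)))"
    have t: "totL ?k (Suc (Suc 0)) (\<lambda>vs. [vs ! 0, prod_encode (vs ! 2, vs ! 1)])"
      by (intro totL_Cons totL_Nil tot_proj tot_pe) auto
    have a: "rep ?k (\<lambda>vs. eval r [prod_encode (vs ! 2, vs ! 1)] (vs ! 0))"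
      using rep_subst[OF E2 t] by simp
    have b: "rep ?k (\<lambda>vs. 1 - df (vs ! 0) (vs ! 3) = 0)"
      by (intro rep_dec tot_sub tot_const tot_df tot_proj) auto
    have c: "rep ?k (\<lambda>vs. 1 - \<chi> [vs ! 0, vs ! 3] = 0)"
      by (intro rep_dec tot_sub tot_const tot2[OF chi(1)] tot_proj) auto
    have "rep (Suc (Suc 0)) (\<lambda>ys. \<exists>t. (\<lambda>us. \<exists>v. (\<lambda>vs. eval r [prod_encode (vs ! 2, vs ! 1)] (vs ! 0) \<and>
        1 - df (vs ! 0) (vs ! 3) = 0 \<and> 1 - \<chi> [vs ! 0, vs ! 3] = 0) (v # us)) (t # ys))"
      by (intro rep_ex rep_conj a b c)
    then show ?thesis
    proof (rule rep_cong)
      fix ys :: "nat list" assume "length ys = Suc (Suc 0)"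
      then obtain c m where ys: "ys = [c, m]" by (auto simp: length_Suc_conv)
      have "1 - df v m = 0 \<longleftrightarrow> v \<noteq> m" for v by (auto simp: df_def)
      moreover have "1 - \<chi> [v, m] = 0 \<longleftrightarrow> \<not> lt (\<rho> v) (\<rho> m)" for v using chi(2) by (metis One_nat_def diff_is_0_eq less_one not_le)
      ultimately show "(\<exists>t. (\<lambda>us. \<exists>v. (\<lambda>vs. eval r [prod_encode (vs ! 2, vs ! 1)] (vs ! 0) \<and>
        1 - df (vs ! 0) (vs ! 3) = 0 \<and> 1 - \<chi> [vs ! 0, vs ! 3] = 0) (v # us)) (t # ys)) = NU (ys ! 0) (ys ! 1)"
        unfolding ys NU_def by (simp add: numeral_3_eq_3 numeral_2_eq_2)
    qed
  qed
  have tpd: "totL (Suc 0) (Suc (Suc 0)) (\<lambda>ys. [fst (prod_decode (ys ! 0)), snd (prod_decode (ys ! 0))])"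
    by (intro totL_Cons totL_Nil tot_fst tot_snd tot_proj) auto
  have r1: "rep 1 (\<lambda>ys. Vn (fst (prod_decode (ys ! 0))) (snd (prod_decode (ys ! 0))))"
    using rep_subst[OF VnR tpd] by (simp add: One_nat_def)
  have SA: "Sigma 1 {c. Vn (fst (prod_decode c)) (snd (prod_decode c))}"
    using Sigma1_of_rep[OF r1] by simp
  have r2: "rep 1 (\<lambda>ys. NU (fst (prod_decode (ys ! 0))) (snd (prod_decode (ys ! 0))))"
    using rep_subst[OF NUR tpd] by (simp add: One_nat_def)
  have PA: "Sigma 1 {c. NU (fst (prod_decode c)) (snd (prod_decode c))}"
    using Sigma1_of_rep[OF r2] by simp
  let ?S = "{(x, d). Vn (code x) (inv \<rho> d)}"
  let ?P = "{(x, d). Up (code x) (inv \<rho> d)}"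
  have "rel_Sigma 1 ks \<rho> ?S" unfolding rel_Sigma_def
    by (rule exI[of _ "{c. Vn (fst (prod_decode c)) (snd (prod_decode c))}"]) (use SA invr in simp)
  moreover have "rel_Pi 1 ks \<rho> ?P" unfolding rel_Pi_def Pi_def
  proof (rule exI[of _ "{c. Up (fst (prod_decode c)) (snd (prod_decode c))}"], intro conjI)
    have "- {c. Up (fst (prod_decode c)) (snd (prod_decode c))} = {c. NU (fst (prod_decode c)) (snd (prod_decode c))}"
      using NUUp by auto
    then show "Sigma 1 (- {c. Up (fst (prod_decode c)) (snd (prod_decode c))})" using PA by simp
  qed (simp add: invr)
  moreover have "\<forall>x\<in>bspace ks. \<forall>d. (x, d) \<in> graph_on ks g \<longleftrightarrow> (x, d) \<in> ?S \<and> (x, d) \<in> ?P"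
  proof (intro ballI allI)
    fix x d assume x: "x \<in> bspace ks"
    show "(x, d) \<in> graph_on ks g \<longleftrightarrow> (x, d) \<in> ?S \<and> (x, d) \<in> ?P"
      using gr[OF x, of "inv \<rho> d"] rinv x by (simp add: graph_on_def)
  qed
  ultimately have G1: "rel_Sigma1_and_Pi1 ks \<rho> (graph_on ks g)"
    unfolding rel_Sigma1_and_Pi1_def by blast
  
  define R where "R ys \<longleftrightarrow> (let c = fst (prod_decode (ys ! 0)); q = snd (prod_decode (ys ! 0));
      w = fst (prod_decode q); m = fst (prod_decode (snd (prod_decode q))); t = snd (prod_decode (snd (prod_decode q)))
      in 1 - C [w, m, prod_encode (c, t)] = 0 \<or> NU c m)" for ys
  have RR: "rep 1 R"
  proof -
    let ?c = "\<lambda>ys::nat list. fst (prod_decode (ys ! 0))"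
    let ?q = "\<lambda>ys::nat list. snd (prod_decode (ys ! 0))"
    have t: "totL (Suc 0) (Suc (Suc 0)) (\<lambda>ys. [?c ys, fst (prod_decode (snd (prod_decode (?q ys))))])"
      by (intro totL_Cons totL_Nil tot_fst tot_snd tot_proj) auto
    have a: "rep (Suc 0) (\<lambda>ys. 1 - C [fst (prod_decode (?q ys)), fst (prod_decode (snd (prod_decode (?q ys)))),
        prod_encode (?c ys, snd (prod_decode (snd (prod_decode (?q ys)))))] = 0)"
      by (intro rep_dec tot_sub tot_const tot_compL[OF Ct] totL_Cons totL_Nil tot_fst tot_snd tot_pe tot_proj) auto
    have "rep (Suc 0) (\<lambda>ys. 1 - C [fst (prod_decode (?q ys)), fst (prod_decode (snd (prod_decode (?q ys)))),
        prod_encode (?c ys, snd (prod_decode (snd (prod_decode (?q ys)))))] = 0 \<or>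
        NU (?c ys) (fst (prod_decode (snd (prod_decode (?q ys))))))"
      using rep_disj[OF a rep_subst[OF NUR t]] by simp
    then show ?thesis by (simp add: R_def[abs_def] Let_def)
  qed
  have "x \<in> dom_on ks g \<longleftrightarrow> (\<exists>q. \<not> R [prod_encode (code x, q)])" if x: "x \<in> bspace ks" for x
  proof -
    have "x \<in> dom_on ks g \<longleftrightarrow> g x \<noteq> None" using x by (simp add: dom_on_def)
    also have "\<dots> \<longleftrightarrow> (\<exists>m. g x = Some (\<rho> m))"
    proof
      assume "g x \<noteq> None"
      then obtain d where "g x = Some d" by blast
      then have "g x = Some (\<rho> (inv \<rho> d))" using rinv[of d] by simp
      then show "\<exists>m. g x = Some (\<rho> m)" by blast
    qed auto
    also have "\<dots> \<longleftrightarrow> (\<exists>m. Vn (code x) m \<and> Up (code x) m)" using gr[OF x] by simp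
    also have "\<dots> \<longleftrightarrow> (\<exists>w m t. C [w, m, prod_encode (code x, t)] = 0 \<and> \<not> NU (code x) m)"
      unfolding Vn_def Cev NUUp[symmetric] by blast
    also have "\<dots> \<longleftrightarrow> (\<exists>q. \<not> R [prod_encode (code x, q)])"
    proof
      assume "\<exists>w m t. C [w, m, prod_encode (code x, t)] = 0 \<and> \<not> NU (code x) m"
      then obtain w m t where "C [w, m, prod_encode (code x, t)] = 0" "\<not> NU (code x) m" by blast
      then have "\<not> R [prod_encode (code x, prod_encode (w, prod_encode (m, t)))]"
        by (simp add: R_def)
      then show "\<exists>q. \<not> R [prod_encode (code x, q)]" by blast
    next
      assume "\<exists>q. \<not> R [prod_encode (code x, q)]"
      then obtain q where "\<not> R [prod_encode (code x, q)]" by blast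
      then have "C [fst (prod_decode q), fst (prod_decode (snd (prod_decode q))),
             prod_encode (code x, snd (prod_decode (snd (prod_decode q))))] = 0"
        "\<not> NU (code x) (fst (prod_decode (snd (prod_decode q))))"
        by (auto simp: R_def Let_def)
      then show "\<exists>w m t. C [w, m, prod_encode (code x, t)] = 0 \<and> \<not> NU (code x) m"
        by blast
    qed
    finally show ?thesis .
  qed
  then have "set_Sigma 2 ks (dom_on ks g)" unfolding set_Sigma_def
    using Sigma2_of_rep[OF RR] by blast
  with G1 show ?thesis by blast
qed

theorem mainTheorem12:
  fixes ks :: "bkind list" and lt :: "'d \<Rightarrow> 'd \<Rightarrow> bool" and \<rho> :: "nat \<Rightarrow> 'd"
    and g :: "bval list \<Rightarrow> 'd option"
  assumes "ks \<noteq> []"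
    and "comp_poset lt \<rho>"
    and "g \<in> MaxPR ks lt \<rho> \<or> g \<in> MinPR ks lt \<rho>"
  shows "rel_Sigma1_and_Pi1 ks \<rho> (graph_on ks g) \<and> set_Sigma 2 ks (dom_on ks g)"
proof -
  let ?L = "{c. lt (\<rho> (fst (prod_decode c))) (\<rho> (snd (prod_decode c)))}"
  have bij: "bij \<rho>" and irr: "\<forall>x. \<not> lt x x" and tr: "\<forall>x y z. lt x y \<longrightarrow> lt y z \<longrightarrow> lt x z"
    and cL: "computable_set ?L"
    using assms(2) unfolding comp_poset_def by auto
  let ?\<chi> = "\<lambda>xs. (1::nat) - (\<lambda>ys. if ys ! 0 \<in> ?L then 1 else 0) [prod_encode (xs ! 0, xs ! 1)]"
  have chi1: "tot 2 ?\<chi>"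
    by (intro tot_sub tot_const tot1[OF tot_of_computable[OF cL]] tot_pe tot_proj) auto
  have chi2: "\<forall>a b. ?\<chi> [a, b] = 0 \<longleftrightarrow> lt (\<rho> a) (\<rho> b)" by simp
  have chi1': "tot 2 (\<lambda>xs. ?\<chi> [xs ! 1, xs ! 0])"
    by (rule tot2[OF chi1 tot_proj tot_proj]) auto
  have chi2': "\<forall>a b. (\<lambda>xs. ?\<chi> [xs ! 1, xs ! 0]) [a, b] = 0 \<longleftrightarrow> (\<lambda>a b. lt b a) (\<rho> a) (\<rho> b)" by simp
  from assms(3) show ?thesis
  proof
    assume "g \<in> MaxPR ks lt \<rho>"
    then obtain f where "pcomp2 ks \<rho> f" "mono_incr ks lt f" "\<forall>x\<in>bspace ks. g x = maxD lt f x"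
      unfolding MaxPR_def by blast
    then show ?thesis using max_case[OF bij irr tr chi1 chi2] by blast
  next
    assume "g \<in> MinPR ks lt \<rho>"
    then obtain f where f: "pcomp2 ks \<rho> f" "mono_decr ks lt f" "\<forall>x\<in>bspace ks. g x = minD lt f x"
      unfolding MinPR_def by blast
    have m: "mono_incr ks (\<lambda>a b. lt b a) f" using f(2) unfolding mono_decr_def mono_incr_def by blast
    have "minD lt f x = maxD (\<lambda>a b. lt b a) f x" for x unfolding minD_def maxD_def by simp
    then have g: "\<forall>x\<in>bspace ks. g x = maxD (\<lambda>a b. lt b a) f x" using f(3) by simp
    have irr': "\<forall>x. \<not> (\<lambda>a b. lt b a) x x" using irr by simp
    have tr': "\<forall>x y z. (\<lambda>a b. lt b a) x y \<longrightarrow> (\<lambda>a b. lt b a) y z \<longrightarrow> (\<lambda>a b. lt b a) x z" using tr by blast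
    show ?thesis using max_case[OF bij irr' tr' chi1' chi2' f(1) m g] .
  qed
qed

end
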